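(* Write \[ \frac{2q J_{20}^{15} J_{2,20} J_{10,20}}{J_{1,20}^3 J_{3,20}^2 J_{4,20}^2 J_{5,20}^2 J_{6,20} J_{7,20}^2 J_{9,20}^3} = \sum_{n\ge 1} b''(n) q^n . \] Then $b''(n) \ge 2n$ for all $n \ge 1$.
   Context: Notation: $(a;q)_\infty = \prod_{i\ge 0}(1-aq^i)$ and $(a_1,\dots,a_k;q)_\infty = (a_1;q)_\infty\cdots(a_k;q)_\infty$. For positive integers $a<b$: $J_b = (q^b;q^b)_\infty$ and $J_{a,b} = (q^a, q^{b-a}, q^b; q^b)_\infty$. *)

theory Defs
  imports "HOL-Computational_Algebra.Formal_Power_Series"
begin

text \<open>(q^a; q^b)_\<infinity> = prod_{i>=0} (1 - q^(a+b*i)) as a formal power series in q.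
  For a \<ge> 1, b \<ge> 1 the n-th coefficient of the infinite product equals that of
  the finite product over i \<le> n (all further factors are 1 + O(q^(n+1))).\<close>
definition qpoch :: "nat \<Rightarrow> nat \<Rightarrow> real fps" where
  "qpoch a b = Abs_fps (\<lambda>n. fps_nth (\<Prod>i\<le>n. (1 - fps_X ^ (a + b * i))) n)"

definition J :: "nat \<Rightarrow> real fps" where
  "J b = qpoch b b"

definition Jab :: "nat \<Rightarrow> nat \<Rightarrow> real fps" where
  "Jab a b = qpoch a b * qpoch (b - a) b * qpoch b b"

end

theory Submission
  imports Defs
begin
unbundle fps_syntax


definition eqn :: "nat \<Rightarrow> real fps \<Rightarrow> real fps \<Rightarrow> bool" where
  "eqn n f g \<longleftrightarrow> (\<forall>k\<le>n. f $ k = g $ k)"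

lemma eqn_refl[simp]: "eqn n f f" by (simp add: eqn_def)
lemma eqn_sym: "eqn n f g \<Longrightarrow> eqn n g f" by (simp add: eqn_def)
lemma eqn_trans: "eqn n f g \<Longrightarrow> eqn n g h \<Longrightarrow> eqn n f h" by (simp add: eqn_def)
lemma eqn_mono: "eqn m f g \<Longrightarrow> n \<le> m \<Longrightarrow> eqn n f g" by (simp add: eqn_def)

lemma eqn_mult: "eqn n f f' \<Longrightarrow> eqn n g g' \<Longrightarrow> eqn n (f*g) (f'*g')"
  unfolding eqn_def fps_mult_nth
proof (intro allI impI)
  fix k assume k: "k \<le> n" and H: "\<forall>k\<le>n. f $ k = f' $ k" "\<forall>k\<le>n. g $ k = g' $ k"
  show "(\<Sum>i = 0..k. f $ i * g $ (k - i)) = (\<Sum>i = 0..k. f' $ i * g' $ (k - i))"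
  proof (rule sum.cong[OF refl])
    fix i assume "i \<in> {0..k}"
    then have "i \<le> n" "k - i \<le> n" using k by auto
    then show "f $ i * g $ (k - i) = f' $ i * g' $ (k - i)" using H by simp
  qed
qed

lemma eqn_add: "eqn n f f' \<Longrightarrow> eqn n g g' \<Longrightarrow> eqn n (f+g) (f'+g')"
  unfolding eqn_def by auto

lemma eqn_inverse:
  assumes "eqn n f g" "f $ 0 \<noteq> 0"
  shows "eqn n (inverse f) (inverse g)"
proof -
  have g0: "g $ 0 \<noteq> 0" using assms unfolding eqn_def by auto
  have "eqn n (inverse f * f * inverse g) (inverse f * g * inverse g)"
    by (intro eqn_mult eqn_refl eqn_sym[OF assms(1)] assms(1))
  moreover have "inverse f * f * inverse g = inverse g"
    using inverse_mult_eq_1[OF assms(2)] by simp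
  moreover have "inverse f * g * inverse g = inverse f"
    using inverse_mult_eq_1'[OF g0] by (simp add: mult.assoc)
  ultimately show ?thesis by (simp add: eqn_sym)
qed

lemma eqn_all: "(\<And>n. eqn n f g) \<Longrightarrow> f = g"
  by (rule fps_ext) (auto simp: eqn_def)

lemma eqn_prod: "(\<And>i. i \<in> I \<Longrightarrow> eqn n (f i) (g i)) \<Longrightarrow> eqn n (\<Prod>i\<in>I. f i) (\<Prod>i\<in>I. g i)"
proof (induction I rule: infinite_finite_induct)
  case (insert x F) then show ?case by (simp add: eqn_mult)
qed auto

definition good :: "(nat \<Rightarrow> real fps) \<Rightarrow> bool" where
  "good f \<longleftrightarrow> (\<forall>i. eqn i (f i) 1)"

definition ip :: "(nat \<Rightarrow> real fps) \<Rightarrow> real fps" where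
  "ip f = Abs_fps (\<lambda>n. (\<Prod>i\<le>n. f i) $ n)"

lemma good_prod_tail:
  assumes "good f" "n \<le> N"
  shows "eqn n (\<Prod>i\<le>N. f i) (\<Prod>i\<le>n. f i)"
  using assms(2)
proof (induction N)
  case 0 then show ?case by simp
next
  case (Suc N)
  show ?case
  proof (cases "n = Suc N")
    case False
    then have "n \<le> N" using Suc by simp
    have "eqn n (f (Suc N)) 1" using assms(1) \<open>n \<le> N\<close> unfolding good_def
      by (meson eqn_mono le_SucI)
    then have "eqn n ((\<Prod>i\<le>N. f i) * f (Suc N)) ((\<Prod>i\<le>n. f i) * 1)"
      using Suc.IH[OF \<open>n \<le> N\<close>] by (intro eqn_mult)
    then show ?thesis by (simp add: prod.atMost_Suc)
  qed simp
qed

lemma ip_eqn: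
  assumes "good f" "n \<le> N"
  shows "eqn n (ip f) (\<Prod>i\<le>N. f i)"
  unfolding eqn_def
proof (intro allI impI)
  fix k assume "k \<le> n"
  have "ip f $ k = (\<Prod>i\<le>k. f i) $ k" by (simp add: ip_def)
  also have "\<dots> = (\<Prod>i\<le>N. f i) $ k"
    using good_prod_tail[OF assms(1), of k N] \<open>k \<le> n\<close> assms(2) by (simp add: eqn_def)
  finally show "ip f $ k = (\<Prod>i\<le>N. f i) $ k" .
qed

lemma good_mult: "good f \<Longrightarrow> good g \<Longrightarrow> good (\<lambda>i. f i * g i)"
  unfolding good_def using eqn_mult[of _ "f _" 1 "g _" 1] by simp

lemma ip_mult:
  assumes "good f" "good g"
  shows "ip (\<lambda>i. f i * g i) = ip f * ip g"
proof (rule eqn_all)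
  fix n
  have "eqn n (ip (\<lambda>i. f i * g i)) (\<Prod>i\<le>n. f i * g i)"
    by (rule ip_eqn[OF good_mult[OF assms]]) simp
  moreover have "eqn n (ip f * ip g) ((\<Prod>i\<le>n. f i) * (\<Prod>i\<le>n. g i))"
    by (intro eqn_mult ip_eqn assms) auto
  ultimately show "eqn n (ip (\<lambda>i. f i * g i)) (ip f * ip g)"
    unfolding prod.distrib by (meson eqn_sym eqn_trans)
qed

lemma good_Suc: "good f \<Longrightarrow> good (\<lambda>i. f (Suc i))"
  unfolding good_def by (meson eqn_mono le_SucI order_refl)

lemma ip_shift:
  assumes "good f"
  shows "ip f = f 0 * ip (\<lambda>i. f (Suc i))"
proof (rule eqn_all)
  fix n
  have "eqn n (ip f) (\<Prod>i\<le>Suc n. f i)" by (rule ip_eqn[OF assms]) simp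
  moreover have "(\<Prod>i\<le>Suc n. f i) = f 0 * (\<Prod>i\<le>n. f (Suc i))"
    by (rule prod.atMost_Suc_shift)
  moreover have "eqn n (f 0 * (\<Prod>i\<le>n. f (Suc i))) (f 0 * ip (\<lambda>i. f (Suc i)))"
    by (intro eqn_mult eqn_refl eqn_sym[OF ip_eqn] good_Suc assms) simp
  ultimately show "eqn n (ip f) (f 0 * ip (\<lambda>i. f (Suc i)))" by (metis eqn_trans)
qed

lemma prod_pair: "(\<Prod>i<m. f (2*i) * f (2*i+1)) = (\<Prod>i<2*m. (f (i::nat) :: real fps))"
proof (induction m)
  case (Suc m)
  have e: "2 * Suc m = Suc (Suc (2*m))" by simp
  show ?case unfolding e prod.lessThan_Suc Suc.IH by (simp only: mult.assoc Suc_eq_plus1)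
qed simp

lemma ip_pair:
  assumes "good f"
  shows "ip f = ip (\<lambda>i. f (2*i) * f (2*i+1))"
proof (rule eqn_all)
  fix n
  have g: "good (\<lambda>i. f (2*i) * f (2*i+1))"
  proof -
    have "good (\<lambda>i. f (2*i))" unfolding good_def
    proof
      fix i have "eqn (2*i) (f (2*i)) 1" using assms good_def by auto
      then show "eqn i (f (2*i)) 1" by (rule eqn_mono) simp
    qed
    moreover have "good (\<lambda>i. f (2*i+1))" unfolding good_def
    proof
      fix i have "eqn (2*i+1) (f (2*i+1)) 1" using assms good_def by auto
      then show "eqn i (f (2*i+1)) 1" by (rule eqn_mono) simp
    qed
    ultimately show ?thesis by (rule good_mult)
  qed
  have h1: "eqn n (ip f) (\<Prod>i\<le>2*n+1. f i)" by (rule ip_eqn[OF assms]) simp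
  have h2: "(\<Prod>i\<le>2*n+1. f i) = (\<Prod>i\<le>n. f (2*i) * f (2*i+1))"
  proof -
    have a: "{..2*n+1} = {..<2*Suc n}" "{..n} = {..<Suc n}" by auto
    show ?thesis unfolding a by (rule prod_pair[symmetric])
  qed
  have h3: "eqn n (ip (\<lambda>i. f (2*i) * f (2*i+1))) (\<Prod>i\<le>n. f (2*i) * f (2*i+1))"
    by (rule ip_eqn[OF g]) simp
  show "eqn n (ip f) (ip (\<lambda>i. f (2*i) * f (2*i+1)))"
    by (rule eqn_trans[OF h1[unfolded h2] eqn_sym[OF h3]])
qed

lemma ip_one: "ip (\<lambda>_. 1) = 1"
  by (rule fps_ext) (simp add: ip_def)

lemma good_0: "good f \<Longrightarrow> f i $ 0 = 1"
  unfolding good_def eqn_def by auto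

lemma good_inverse: "good f \<Longrightarrow> good (\<lambda>i. inverse (f i))"
  unfolding good_def
proof
  fix i assume "\<forall>i. eqn i (f i) 1"
  then have "eqn i (inverse (f i)) (inverse 1)"
    by (intro eqn_inverse) (auto simp: eqn_def)
  then show "eqn i (inverse (f i)) 1" by simp
qed

lemma ip_inverse:
  assumes "good f"
  shows "inverse (ip f) = ip (\<lambda>i. inverse (f i))"
proof (rule fps_inverse_unique)
  have "ip f * ip (\<lambda>i. inverse (f i)) = ip (\<lambda>i. f i * inverse (f i))"
    by (rule ip_mult[symmetric, OF assms good_inverse[OF assms]])
  also have "(\<lambda>i. f i * inverse (f i)) = (\<lambda>_. 1)"
    using inverse_mult_eq_1'[of "f _"] good_0[OF assms] by auto
  finally show "ip f * ip (\<lambda>i. inverse (f i)) = 1" by (simp add: ip_one)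
qed

lemma ip_0: "good f \<Longrightarrow> ip f $ 0 = 1"
  by (simp add: ip_def good_0)

lemma good_minus: "(\<And>i. i < e i) \<Longrightarrow> good (\<lambda>i. 1 - fps_X ^ e i)"
  unfolding good_def eqn_def by (auto simp: not_le)

lemma good_plus: "(\<And>i. i < e i) \<Longrightarrow> good (\<lambda>i. 1 + fps_X ^ e i)"
  unfolding good_def eqn_def by (auto simp: not_le)


lemma qpoch_ip: "qpoch a b = ip (\<lambda>i. 1 - fps_X ^ (a + b * i))"
  by (simp add: qpoch_def ip_def)

definition pp :: "nat \<Rightarrow> nat \<Rightarrow> real fps" where
  "pp a b = ip (\<lambda>i. 1 + fps_X ^ (a + b * i))"

lemma lt_lin: "1 \<le> a \<Longrightarrow> 1 \<le> b \<Longrightarrow> i < a + b * (i::nat)"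
proof -
  assume "1 \<le> a" "1 \<le> b"
  then have "i \<le> b * i" by simp
  then show ?thesis using \<open>1 \<le> a\<close> by linarith
qed

lemma good_q: "1 \<le> a \<Longrightarrow> 1 \<le> b \<Longrightarrow> good (\<lambda>i. 1 - fps_X ^ (a + b * i))"
  by (rule good_minus) (rule lt_lin)

lemma good_p: "1 \<le> a \<Longrightarrow> 1 \<le> b \<Longrightarrow> good (\<lambda>i. 1 + fps_X ^ (a + b * i))"
  by (rule good_plus) (rule lt_lin)

lemma qpoch_split:
  assumes "1 \<le> a" "1 \<le> b"
  shows "qpoch a b = qpoch a (2*b) * qpoch (a+b) (2*b)"
proof -
  have "qpoch a b = ip (\<lambda>i. (1 - fps_X ^ (a + b * (2*i))) * (1 - fps_X ^ (a + b * (2*i+1))))"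
    unfolding qpoch_ip by (rule ip_pair[OF good_q[OF assms]])
  also have "\<dots> = ip (\<lambda>i. (1 - fps_X ^ (a + 2*b * i)) * (1 - fps_X ^ (a + b + 2 * b * i)))"
    by (simp add: algebra_simps)
  also have "\<dots> = qpoch a (2*b) * qpoch (a+b) (2*b)"
    unfolding qpoch_ip using assms by (intro ip_mult good_q) auto
  finally show ?thesis .
qed

lemma qpoch_double:
  assumes "1 \<le> a" "1 \<le> b"
  shows "qpoch (2*a) (2*b) = qpoch a b * pp a b"
proof -
  have e: "\<And>i. (1 - fps_X ^ (2*a + 2*b*i) :: real fps) = (1 - fps_X ^ (a + b * i)) * (1 + fps_X ^ (a + b * i))"
  proof -
    fix i
    have "(fps_X ^ (2*a + 2*b*i) :: real fps) = fps_X ^ (a + b * i) * fps_X ^ (a + b * i)"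
      by (simp add: power_add[symmetric] algebra_simps)
    then show "(1 - fps_X ^ (2*a + 2*b*i) :: real fps) = (1 - fps_X ^ (a + b * i)) * (1 + fps_X ^ (a + b * i))"
      by (simp add: algebra_simps)
  qed
  show ?thesis unfolding qpoch_ip pp_def e using assms by (intro ip_mult good_q good_p) auto
qed

lemma qpoch_shift:
  assumes "1 \<le> a" "1 \<le> b"
  shows "qpoch a b = (1 - fps_X ^ a) * qpoch (a+b) b"
proof -
  have "qpoch a b = (1 - fps_X ^ (a + b * 0)) * ip (\<lambda>i. 1 - fps_X ^ (a + b * Suc i))"
    unfolding qpoch_ip by (rule ip_shift[OF good_q[OF assms]])
  then show ?thesis unfolding qpoch_ip by (simp add: algebra_simps)
qed

lemma ip_mult3: "good f \<Longrightarrow> good g \<Longrightarrow> good h \<Longrightarrow> ip (\<lambda>t. f t * g t * h t) = ip f * ip g * ip h"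
  by (simp add: ip_mult good_mult)

lemma ac5: "(f::'a::comm_monoid_mult) * ia * ib * a * b = f * (ia * a) * (ib * b)"
  by (simp add: ac_simps)

definition tt :: "nat \<Rightarrow> nat \<Rightarrow> nat \<Rightarrow> real fps" where
  "tt a b d = ip (\<lambda>t. (1 - fps_X ^ (a + b + 2*d*t)) * inverse (1 - fps_X ^ (a + d*t))
                       * inverse (1 - fps_X ^ (b + d*t)))"

lemma good_tt: "1 \<le> a \<Longrightarrow> 1 \<le> b \<Longrightarrow> 1 \<le> d \<Longrightarrow>
  good (\<lambda>t. (1 - fps_X ^ (a + b + 2*d*t)) * inverse (1 - fps_X ^ (a + d*t))
                       * inverse (1 - fps_X ^ (b + d*t)))"
  by (intro good_mult good_inverse good_q) auto

lemma qpoch_tt: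
  assumes "1 \<le> a" "1 \<le> b" "1 \<le> d"
  shows "qpoch (a+b) (2*d) = tt a b d * qpoch a d * qpoch b d"
proof -
  have c: "\<And>e. 1 \<le> e \<Longrightarrow> inverse (1 - fps_X ^ e) * (1 - fps_X ^ e) = (1::real fps)"
    by (rule inverse_mult_eq_1) simp
  have "tt a b d * qpoch a d * qpoch b d = ip (\<lambda>t. ((1 - fps_X ^ (a + b + 2*d*t)) * inverse (1 - fps_X ^ (a + d*t))
                       * inverse (1 - fps_X ^ (b + d*t))) * (1 - fps_X ^ (a + d*t)) * (1 - fps_X ^ (b + d*t)))"
    unfolding tt_def qpoch_ip
    by (rule ip_mult3[symmetric, OF good_tt good_q good_q]) (use assms in auto)
  also have "\<dots> = ip (\<lambda>t. 1 - fps_X ^ (a + b + 2*d*t))"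
  proof -
    have eq: "\<And>t. ((1 - fps_X ^ (a + b + 2*d*t) :: real fps) * inverse (1 - fps_X ^ (a + d*t))
                       * inverse (1 - fps_X ^ (b + d*t))) * (1 - fps_X ^ (a + d*t)) * (1 - fps_X ^ (b + d*t))
          = 1 - fps_X ^ (a + b + 2*d*t)"
    proof -
      fix t
      have "((1 - fps_X ^ (a + b + 2*d*t) :: real fps) * inverse (1 - fps_X ^ (a + d*t))
                       * inverse (1 - fps_X ^ (b + d*t))) * (1 - fps_X ^ (a + d*t)) * (1 - fps_X ^ (b + d*t))
          = (1 - fps_X ^ (a + b + 2*d*t)) * (inverse (1 - fps_X ^ (a + d*t)) * (1 - fps_X ^ (a + d*t)))
                       * (inverse (1 - fps_X ^ (b + d*t)) * (1 - fps_X ^ (b + d*t)))"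
        by (rule ac5)
      also have "\<dots> = 1 - fps_X ^ (a + b + 2*d*t)" using assms by (simp add: c)
      finally show "?thesis t" .
    qed
    show ?thesis by (simp only: eq)
  qed
  finally show ?thesis unfolding qpoch_ip by (simp add: algebra_simps)
qed


definition nn :: "real fps \<Rightarrow> bool" where "nn f \<longleftrightarrow> (\<forall>k. 0 \<le> f $ k)"

lemma nn_mult: "nn f \<Longrightarrow> nn g \<Longrightarrow> nn (f * g)"
  unfolding nn_def fps_mult_nth by (auto intro!: sum_nonneg)

lemma nn_add: "nn f \<Longrightarrow> nn g \<Longrightarrow> nn (f + g)"
  unfolding nn_def by (simp add: add_nonneg_nonneg)

lemma nn_one: "nn 1" unfolding nn_def by simp

lemma nn_Xp: "nn (fps_X ^ e)" unfolding nn_def by simp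

lemma nn_power: "nn f \<Longrightarrow> nn (f ^ n)"
  by (induction n) (simp_all add: nn_one nn_mult)

lemma nn_prod: "(\<And>i. i \<in> I \<Longrightarrow> nn (f i)) \<Longrightarrow> nn (\<Prod>i\<in>I. f i)"
proof (induction I rule: infinite_finite_induct)
  case (insert x F) then show ?case by (simp add: nn_mult)
qed (simp_all add: nn_one)

lemma nn_ip: "(\<And>i. nn (f i)) \<Longrightarrow> nn (ip f)"
proof -
  assume h: "\<And>i. nn (f i)"
  have "\<And>n. nn (\<Prod>i\<le>n. f i)" by (rule nn_prod) (rule h)
  then show "nn (ip f)" unfolding nn_def ip_def by simp
qed

definition geo :: "nat \<Rightarrow> real fps" where "geo e = Abs_fps (\<lambda>k. if e dvd k then 1 else 0)"

lemma inv_geo: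
  assumes "1 \<le> e"
  shows "inverse (1 - fps_X ^ e :: real fps) = geo e"
proof (rule fps_inverse_unique)
  show "(1 - fps_X ^ e) * geo e = 1"
  proof (rule fps_ext)
    fix k
    have "((1 - fps_X ^ e) * geo e) $ k = geo e $ k - (fps_X ^ e * geo e) $ k"
      by (simp add: algebra_simps)
    also have "\<dots> = (if k = 0 then 1 else 0)"
    proof (cases "k < e")
      case True
      then have "e dvd k \<longleftrightarrow> k = 0" using assms by (auto dest: dvd_imp_le)
      then show ?thesis using True by (simp add: fps_X_power_mult_nth geo_def)
    next
      case False
      then have "e dvd k \<longleftrightarrow> e dvd (k - e)" by (simp add: dvd_minus_self)
      moreover have "k \<noteq> 0" using False assms by auto
      ultimately show ?thesis using False by (simp add: fps_X_power_mult_nth geo_def)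
    qed
    finally show "((1 - fps_X ^ e) * geo e) $ k = 1 $ k" by simp
  qed
qed

lemma nn_inv1: "1 \<le> e \<Longrightarrow> nn (inverse (1 - fps_X ^ e))"
  by (simp add: inv_geo nn_def geo_def)

lemma nn_pp: "nn (pp a b)"
  unfolding pp_def by (intro nn_ip nn_add nn_one nn_Xp)

lemma tt_factor_eq:
  fixes a' b' x ia ib :: "'a::comm_ring_1"
  assumes "ia * a' = 1" "ib * b' = 1"
  shows "(a' + x * b') * ia * ib = ib + x * ia"
proof -
  have "(a' + x * b') * ia * ib = (ia * a') * ib + x * ia * (ib * b')" by (simp add: algebra_simps)
  then show ?thesis using assms by simp
qed

lemma nn_tt: "1 \<le> a \<Longrightarrow> 1 \<le> b \<Longrightarrow> 1 \<le> d \<Longrightarrow> nn (tt a b d)"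
  unfolding tt_def
proof (intro nn_ip)
  fix t assume as: "1 \<le> a" "1 \<le> b" "1 \<le> d"
  define A where "A = a + d*t"
  define B where "B = b + d*t"
  have AB: "a + b + 2*d*t = A + B" unfolding A_def B_def by simp
  have A1: "1 \<le> A" "1 \<le> B" using as unfolding A_def B_def by auto
  have e1: "(1 - fps_X ^ (A + B) :: real fps) = (1 - fps_X ^ A) + fps_X ^ A * (1 - fps_X ^ B)"
    by (simp add: power_add algebra_simps)
  have i1: "inverse (1 - fps_X ^ A) * (1 - fps_X ^ A) = (1::real fps)"
    by (rule inverse_mult_eq_1) (use A1 in simp)
  have i2: "inverse (1 - fps_X ^ B) * (1 - fps_X ^ B) = (1::real fps)"
    by (rule inverse_mult_eq_1) (use A1 in simp)
  have "(1 - fps_X ^ (A + B) :: real fps) * inverse (1 - fps_X ^ A) * inverse (1 - fps_X ^ B)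
      = inverse (1 - fps_X ^ B) + fps_X ^ A * inverse (1 - fps_X ^ A)"
    by (subst e1) (rule tt_factor_eq[OF i1 i2])
  moreover have "nn (inverse (1 - fps_X ^ B) + fps_X ^ A * inverse (1 - fps_X ^ A))"
    using A1 by (intro nn_add nn_mult nn_Xp nn_inv1)
  ultimately show "nn ((1 - fps_X ^ (a + b + 2*d*t)) * inverse (1 - fps_X ^ (a + d*t))
                       * inverse (1 - fps_X ^ (b + d*t)))"
    unfolding AB A_def[symmetric] B_def[symmetric] by simp
qed

lemma nn_invq: "1 \<le> a \<Longrightarrow> 1 \<le> b \<Longrightarrow> nn (inverse (qpoch a b))"
  unfolding qpoch_ip
  by (simp only: ip_inverse[OF good_q]) (intro nn_ip nn_inv1, auto)

lemma qpoch_0: "1 \<le> a \<Longrightarrow> 1 \<le> b \<Longrightarrow> qpoch a b $ 0 = 1"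
  unfolding qpoch_ip by (rule ip_0[OF good_q])

lemma tt_0: "1 \<le> a \<Longrightarrow> 1 \<le> b \<Longrightarrow> 1 \<le> d \<Longrightarrow> tt a b d $ 0 = 1"
  unfolding tt_def by (rule ip_0[OF good_tt])

lemma pp_0: "1 \<le> a \<Longrightarrow> 1 \<le> b \<Longrightarrow> pp a b $ 0 = 1"
  unfolding pp_def by (rule ip_0[OF good_p])

lemma final_bound:
  assumes "nn R" "R $ 0 = 1" "1 \<le> n"
  shows "2 * real n \<le> (2 * fps_X * (inverse (1 - fps_X) * inverse (1 - fps_X) * R)) $ n"
proof -
  have g: "inverse (1 - fps_X :: real fps) = geo 1" using inv_geo[of 1] by simp
  have gg: "(geo 1 * geo 1) $ m = real m + 1" for m
    by (simp add: fps_mult_nth geo_def)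
  have "(geo 1 * geo 1 * R) $ (n - 1) = (\<Sum>i=0..n-1. (geo 1 * geo 1) $ i * R $ (n - 1 - i))"
    by (rule fps_mult_nth)
  also have "\<dots> \<ge> (geo 1 * geo 1) $ (n-1) * R $ (n - 1 - (n-1))"
    by (rule member_le_sum) (use assms(1) gg in \<open>auto simp: nn_def\<close>)
  finally have "(geo 1 * geo 1 * R) $ (n - 1) \<ge> real n"
    using gg[of "n-1"] assms by simp
  moreover have x2: "(2 * fps_X * F) $ n = 2 * F $ (n - 1)" for F :: "real fps"
  proof -
    have e: "2 * fps_X * F = fps_X * F + fps_X * F" by (metis mult_2 mult.assoc)
    have a: "(2 * fps_X * F) $ n = (fps_X * F) $ n + (fps_X * F) $ n" by (simp only: e fps_add_nth)
    have b: "(fps_X * F) $ n = F $ (n - 1)" using assms(3) by (simp add: fps_X_mult_nth)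
    show ?thesis unfolding a b by simp
  qed
  ultimately show ?thesis unfolding g x2 by linarith
qed

lemma ring_id:
  fixes q1 q2 q3 q4 q5 q6 q7 q9 q10 q11 q13 q14 q15 q16 q17 q18 q19 q21 z t1 t2 p1 p5 p9 x :: "'a::comm_ring_1"
  assumes "q2 = q1*q11*p1" "q18 = q9*q19*p9" "q10 = q5*q15*p5" "z = t1*q9*q11*t2*q19*q21" "q1 = x*q21"
  shows "z^15 * (q2*q18*z) * (q10*q10*z) * (x*x*(q3^2*q17^2*q4^2*q16^2*q6*q14*q7^2*q13^2))
   = t1^2*t2^2*p1*p9*p5^2 * ((q1*q19*z)^3 * (q3*q17*z)^2 * (q4*q16*z)^2*(q5*q15*z)^2*(q6*q14*z)*(q7*q13*z)^2*(q9*q11*z)^3)"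
proof -
  have f1: "z^15 * (q2*q18*z) * (q10*q10*z) * (x*x*(q3^2*q17^2*q4^2*q16^2*q6*q14*q7^2*q13^2))
     = z^15 * (z*z * q2*q18 *q10*q10 *x*x*q3^2*q17^2*q4^2*q16^2*q6*q14*q7^2*q13^2)"
    by (simp add: ac_simps)
  have f2: "(q1*q19*z)^3 * (q3*q17*z)^2 * (q4*q16*z)^2*(q5*q15*z)^2*(q6*q14*z)*(q7*q13*z)^2*(q9*q11*z)^3
     = z^15 * (q1^3*q19^3*q3^2*q17^2*q4^2*q16^2*q5^2*q15^2*q6*q14*q7^2*q13^2*q9^3*q11^3)"
    by (simp add: power_mult_distrib eval_nat_numeral ac_simps)
  have f3: "z*z * q2*q18 *q10*q10 *x*x*q3^2*q17^2*q4^2*q16^2*q6*q14*q7^2*q13^2 =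
      t1^2*t2^2*p1*p9*p5^2 * (q1^3*q19^3*q3^2*q17^2*q4^2*q16^2*q5^2*q15^2*q6*q14*q7^2*q13^2*q9^3*q11^3)"
    unfolding assms by (simp add: power_mult_distrib eval_nat_numeral ac_simps)
  show ?thesis unfolding f1 f2 f3 by (simp only: ac_simps)
qed


lemma inv_cancel:
  fixes a b f g :: "real fps"
  assumes "f $ 0 \<noteq> 0" "g $ 0 \<noteq> 0" "a * g = b * f"
  shows "a * inverse f = b * inverse g"
proof -
  have "a * inverse f = a * inverse f * (g * inverse g)" using inverse_mult_eq_1'[OF assms(2)] by simp
  also have "\<dots> = (a * g) * inverse f * inverse g" by (simp only: ac_simps)
  also have "\<dots> = b * (f * inverse f) * inverse g" unfolding assms(3) by (simp only: ac_simps)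
  also have "\<dots> = b * inverse g" using inverse_mult_eq_1'[OF assms(1)] by simp
  finally show ?thesis .
qed

lemma Jab_0: "1 \<le> a \<Longrightarrow> a < b \<Longrightarrow> Jab a b $ 0 = 1"
  unfolding Jab_def by (simp add: qpoch_0)

theorem mainTheorem7:
  fixes b2 :: "nat \<Rightarrow> real"
  assumes "\<And>n. b2 n = fps_nth
      (2 * fps_X * J 20 ^ 15 * Jab 2 20 * Jab 10 20 *
       inverse (Jab 1 20 ^ 3 * Jab 3 20 ^ 2 * Jab 4 20 ^ 2 * Jab 5 20 ^ 2 * Jab 6 20 *
                Jab 7 20 ^ 2 * Jab 9 20 ^ 3)) n"
  shows "\<forall>n\<ge>1. b2 n \<ge> 2 * real n"
proof -
  have e1: "qpoch 2 20 = qpoch 1 20 * qpoch 11 20 * pp 1 10"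
    using qpoch_double[of 1 10] qpoch_split[of 1 10] by simp
  have e2: "qpoch 18 20 = qpoch 9 20 * qpoch 19 20 * pp 9 10"
    using qpoch_double[of 9 10] qpoch_split[of 9 10] by simp
  have e3: "qpoch 10 20 = qpoch 5 20 * qpoch 15 20 * pp 5 10"
    using qpoch_double[of 5 10] qpoch_split[of 5 10] by simp
  have e4: "qpoch 20 20 = tt 9 11 20 * qpoch 9 20 * qpoch 11 20 * tt 19 21 20 * qpoch 19 20 * qpoch 21 20"
    using qpoch_split[of 20 20] qpoch_tt[of 9 11 20] qpoch_tt[of 19 21 20] by (simp add: ac_simps)
  have e5: "qpoch 1 20 = (1 - fps_X) * qpoch 21 20"
    using qpoch_shift[of 1 20] by simp
  have j: "Jab 1 20 = qpoch 1 20 * qpoch 19 20 * qpoch 20 20"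
    "Jab 2 20 = qpoch 2 20 * qpoch 18 20 * qpoch 20 20"
    "Jab 3 20 = qpoch 3 20 * qpoch 17 20 * qpoch 20 20"
    "Jab 4 20 = qpoch 4 20 * qpoch 16 20 * qpoch 20 20"
    "Jab 5 20 = qpoch 5 20 * qpoch 15 20 * qpoch 20 20"
    "Jab 6 20 = qpoch 6 20 * qpoch 14 20 * qpoch 20 20"
    "Jab 7 20 = qpoch 7 20 * qpoch 13 20 * qpoch 20 20"
    "Jab 9 20 = qpoch 9 20 * qpoch 11 20 * qpoch 20 20"
    "Jab 10 20 = qpoch 10 20 * qpoch 10 20 * qpoch 20 20"
    by (simp_all add: Jab_def)
  define Den where "Den = Jab 1 20 ^ 3 * Jab 3 20 ^ 2 * Jab 4 20 ^ 2 * Jab 5 20 ^ 2 * Jab 6 20 *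
                Jab 7 20 ^ 2 * Jab 9 20 ^ 3"
  define N0 where "N0 = J 20 ^ 15 * Jab 2 20 * Jab 10 20"
  define D' where "D' = qpoch 3 20^2*qpoch 17 20^2*qpoch 4 20^2*qpoch 16 20^2*qpoch 6 20*qpoch 14 20*qpoch 7 20^2*qpoch 13 20^2"
  define Hn where "Hn = tt 9 11 20^2*tt 19 21 20^2*pp 1 10*pp 9 10*pp 5 10^2"
  define x :: "real fps" where "x = 1 - fps_X"
  have key: "N0 * (x * x * D') = Hn * Den"
    unfolding N0_def Den_def D'_def Hn_def J_def j
    by (rule ring_id[OF e1 e2 e3 e4 e5[folded x_def]])
  have Den0: "Den $ 0 \<noteq> 0"
    unfolding Den_def by (simp add: Jab_0 fps_power_zeroth)
  have D0: "D' $ 0 = 1"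
    unfolding D'_def by (simp add: qpoch_0 fps_power_zeroth)
  have x0: "x $ 0 = 1" unfolding x_def by simp
  have g0: "(x * x * D') $ 0 \<noteq> 0" using D0 x0 by simp
  have main: "N0 * inverse Den = Hn * inverse (x * x * D')"
    by (rule inv_cancel[OF Den0 g0 key])
  define R where "R = Hn * inverse D'"
  have expr: "2 * fps_X * J 20 ^ 15 * Jab 2 20 * Jab 10 20 * inverse Den
     = 2 * fps_X * (inverse (1 - fps_X) * inverse (1 - fps_X) * R)"
  proof -
    have "2 * fps_X * J 20 ^ 15 * Jab 2 20 * Jab 10 20 * inverse Den = 2 * fps_X * (N0 * inverse Den)"
      unfolding N0_def by (simp only: mult.assoc)
    also have "\<dots> = 2 * fps_X * (Hn * (inverse x * inverse x * inverse D'))"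
      unfolding main by (simp only: fps_inverse_mult)
    also have "\<dots> = 2 * fps_X * (inverse (1 - fps_X) * inverse (1 - fps_X) * R)"
      unfolding R_def x_def by (simp only: ac_simps)
    finally show ?thesis .
  qed
  have nnR: "nn R"
    unfolding R_def Hn_def D'_def
    by (simp only: fps_inverse_mult fps_inverse_power)
       (intro nn_mult nn_power nn_tt nn_pp nn_invq; simp)
  have R0: "R $ 0 = 1"
    unfolding R_def Hn_def using D0 by (simp add: tt_0 pp_0 fps_power_zeroth)
  show ?thesis
  proof (intro allI impI)
    fix n :: nat assume "n \<ge> 1"
    have "b2 n = (2 * fps_X * (inverse (1 - fps_X) * inverse (1 - fps_X) * R)) $ n"
      using assms[of n] unfolding expr[unfolded Den_def] .
    then show "b2 n \<ge> 2 * real n" using final_bound[OF nnR R0 \<open>n \<ge> 1\<close>] by simp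
  qed
qed


end
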